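(* Let $f\in C^6([-1,1])$ and $M:=\sup\{|f^{(6)}(x)| : x\in[-1,1]\}$. Define \[ T(f):=\tfrac{2}{5}\cdot\tfrac13\bigl(f(-1)+4f(0)+f(1)\bigr)+\tfrac35\Bigl(f\bigl(-\tfrac{\sqrt3}{3}\bigr)+f\bigl(\tfrac{\sqrt3}{3}\bigr)\Bigr),\qquad I(f):=\int_{-1}^1 f(x)\,dx . \] Then $|T(f)-I(f)|\le \dfrac{M}{28350}$. *)

theory Defs
  imports "HOL-Analysis.Analysis"
begin

end

theory Submission
  imports Defs
begin
definition pw :: "nat \<Rightarrow> nat \<Rightarrow> real \<Rightarrow> real \<Rightarrow> real" where
 "pw k n c x = (if k \<le> n then fact n / fact (n-k) * (x-c)^(n-k) else 0)"

lemma pw_deriv: "((pw k n c) has_real_derivative pw (Suc k) n c x) (at x within S)"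
proof (cases "k < n")
  case True
  then obtain m where m: "n - k = Suc m" "n - Suc k = m" by (metis Suc_diff_Suc diff_Suc_eq_diff_pred diff_Suc_1)
  have e: "pw k n c = (\<lambda>x. fact n / fact (Suc m) * (x-c)^(Suc m))" using True m by (auto simp: pw_def fun_eq_iff)
  have e2: "pw (Suc k) n c x = fact n / fact m * (x-c)^m" using True m by (simp add: pw_def)
  show ?thesis unfolding e e2
    by (rule derivative_eq_intros refl)+ (simp add: fact_Suc del: of_nat_Suc)
next
  case False
  have e: "pw k n c = (\<lambda>x. if k = n then fact n else 0)" using False by (auto simp: pw_def fun_eq_iff)
  have e2: "pw (Suc k) n c x = 0" using False by (simp add: pw_def)
  show ?thesis unfolding e e2 by simp
qed

definition a0 :: real where "a0 = sqrt 3 / 3"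
definition K1 where "K1 k x = pw k 6 (-1) x / 720 - pw k 5 (-1) x / 900"
definition K4 where "K4 k x = pw k 6 1 x / 720 + pw k 5 1 x / 900"
definition K3 where "K3 k x = K4 k x + pw k 5 a0 x / 200"
definition K2 where "K2 k x = K3 k x + pw k 5 0 x / 225"

lemma s2: "a0 ^ 2 = 1/3" by (simp add: a0_def power_divide)


lemma K12_0: "K1 0 (-a0) = K2 0 (-a0)"
proof -
  have "K1 0 (-a0) - K2 0 (-a0) = (a0^2 - 1/3) * (a0/60 + 3*a0^3/20)"
    by (simp add: K1_def K2_def K3_def K4_def pw_def eval_nat_numeral field_simps)
  then show ?thesis using s2 by simp
qed
lemma K12_1: "K1 1 (-a0) = K2 1 (-a0)"
proof -
  have "K1 1 (-a0) - K2 1 (-a0) = (a0^2 - 1/3) * (-1/60 - 7*a0^2/20)"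
    by (simp add: K1_def K2_def K3_def K4_def pw_def eval_nat_numeral field_simps)
  then show ?thesis using s2 by simp
qed
lemma K12_2: "K1 2 (-a0) = K2 2 (-a0)"
proof -
  have "K1 2 (-a0) - K2 2 (-a0) = (a0^2 - 1/3) * (3*a0/5)"
    by (simp add: K1_def K2_def K3_def K4_def pw_def eval_nat_numeral field_simps)
  then show ?thesis using s2 by simp
qed
lemma K12_3: "K1 3 (-a0) = K2 3 (-a0)"
proof -
  have "K1 3 (-a0) - K2 3 (-a0) = (a0^2 - 1/3) * (-3/5)"
    by (simp add: K1_def K2_def K3_def K4_def pw_def eval_nat_numeral field_simps)
  then show ?thesis using s2 by simp
qed
lemma K12_4: "K1 4 (-a0) = K2 4 (-a0)"
  by (simp add: K1_def K2_def K3_def K4_def pw_def eval_nat_numeral field_simps)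
lemma K12_5: "K1 5 (-a0) = K2 5 (-a0) + 3/5"
  by (simp add: K1_def K2_def K3_def K4_def pw_def eval_nat_numeral field_simps)

lemma K1d: "(K1 k has_real_derivative K1 (Suc k) x) (at x within S)"
  unfolding K1_def[abs_def] by (auto intro!: derivative_eq_intros pw_deriv)
lemma K4d: "(K4 k has_real_derivative K4 (Suc k) x) (at x within S)"
  unfolding K4_def[abs_def] by (auto intro!: derivative_eq_intros pw_deriv)
lemma K3d: "(K3 k has_real_derivative K3 (Suc k) x) (at x within S)"
  unfolding K3_def[abs_def] by (auto intro!: derivative_eq_intros pw_deriv K4d)
lemma K2d: "(K2 k has_real_derivative K2 (Suc k) x) (at x within S)"
  unfolding K2_def[abs_def] by (auto intro!: derivative_eq_intros pw_deriv K3d)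

lemma K6: "K1 6 x = 1" "K2 6 x = 1" "K3 6 x = 1" "K4 6 x = 1"
  by (simp_all add: K1_def K2_def K3_def K4_def pw_def fact_numeral)

definition GG :: "(nat \<Rightarrow> real \<Rightarrow> real) \<Rightarrow> (nat \<Rightarrow> real \<Rightarrow> real) \<Rightarrow> real \<Rightarrow> real" where
  "GG K Df x = K 5 x * Df 0 x - K 4 x * Df 1 x + K 3 x * Df 2 x - K 2 x * Df 3 x
     + K 1 x * Df 4 x - K 0 x * Df 5 x"

lemma piece:
  fixes K Df :: "nat \<Rightarrow> real \<Rightarrow> real" and f :: "real \<Rightarrow> real"
  assumes uv: "u \<le> v" "{u..v} \<subseteq> {-1..1}"
    and dK: "\<And>k x. (K k has_real_derivative K (Suc k) x) (at x within {u..v})"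
    and K6: "\<And>x. K 6 x = 1"
    and D0: "\<And>x. x \<in> {-1..1} \<Longrightarrow> Df 0 x = f x"
    and Dsuc: "\<And>k x. k < 6 \<Longrightarrow> x \<in> {-1..1} \<Longrightarrow>
        (Df k has_real_derivative Df (Suc k) x) (at x within {-1..1})"
  shows "((\<lambda>x. f x - K 0 x * Df 6 x) has_integral (GG K Df v - GG K Df u)) {u..v}"
proof -
  have "((\<lambda>x. Df 0 x - K 0 x * Df 6 x) has_integral (GG K Df v - GG K Df u)) {u..v}"
  proof (rule fundamental_theorem_of_calculus[OF uv(1)])
    fix x assume x: "x \<in> {u..v}"
    have D: "\<And>j. j < 6 \<Longrightarrow> (Df j has_real_derivative Df (Suc j) x) (at x within {u..v})"
      using Dsuc x uv(2) by (meson has_field_derivative_subset subsetD)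
    have "(GG K Df has_real_derivative (K 6 x * Df 0 x - K 0 x * Df 6 x)) (at x within {u..v})"
      unfolding GG_def[abs_def]
      by (auto intro!: derivative_eq_intros dK D simp: algebra_simps eval_nat_numeral)
    then show "(GG K Df has_vector_derivative (Df 0 x - K 0 x * Df 6 x)) (at x within {u..v})"
      by (simp add: K6 has_real_derivative_iff_has_vector_derivative)
  qed
  then show ?thesis
    by (rule has_integral_eq[rotated]) (use D0 uv in auto)
qed


definition Kg :: "real \<Rightarrow> real" where
  "Kg x = (if x \<le> -a0 then K1 0 x else if x \<le> 0 then K2 0 x else if x \<le> a0 then K3 0 x else K4 0 x)"

lemma s_bds: "1.73 < sqrt 3" "sqrt 3 < (1.735::real)"
  by (rule real_less_rsqrt, simp add: power2_eq_square) (rule real_less_lsqrt, simp_all add: power2_eq_square)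

lemma a0_bds: "0 < a0" "a0 < 1" "2883/5000 < a0" "a0 < 723/1250"
  using s_bds by (auto simp: a0_def)

lemma peano:
  fixes Df :: "nat \<Rightarrow> real \<Rightarrow> real" and f :: "real \<Rightarrow> real"
  assumes D0: "\<And>x. x \<in> {-1..1} \<Longrightarrow> Df 0 x = f x"
    and Dsuc: "\<And>k x. k < 6 \<Longrightarrow> x \<in> {-1..1} \<Longrightarrow>
        (Df k has_real_derivative Df (Suc k) x) (at x within {-1..1})"
  shows "((\<lambda>x. f x - Kg x * Df 6 x) has_integral
     ((2/5) * ((1/3) * (f (-1) + 4 * f 0 + f 1)) + (3/5) * (f (-a0) + f a0))) {-1..1}"
proof -
  note a = a0_bds
  let ?g = "\<lambda>x. f x - Kg x * Df 6 x"
  have fin: "finite {-a0, 0, a0}" by simp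
  have I1: "(?g has_integral (GG K1 Df (-a0) - GG K1 Df (-1))) {-1..-a0}"
    apply (rule has_integral_spike_finite[OF fin _ piece[of "-1" "-a0" K1 Df f, OF _ _ K1d K6(1) D0 Dsuc]])
    using a by (auto simp: Kg_def)
  have I2: "(?g has_integral (GG K2 Df 0 - GG K2 Df (-a0))) {-a0..0}"
    apply (rule has_integral_spike_finite[OF fin _ piece[of "-a0" "0" K2 Df f, OF _ _ K2d K6(2) D0 Dsuc]])
    using a by (auto simp: Kg_def)
  have I3: "(?g has_integral (GG K3 Df a0 - GG K3 Df 0)) {0..a0}"
    apply (rule has_integral_spike_finite[OF fin _ piece[of "0" "a0" K3 Df f, OF _ _ K3d K6(3) D0 Dsuc]])
    using a by (auto simp: Kg_def)
  have I4: "(?g has_integral (GG K4 Df 1 - GG K4 Df a0)) {a0..1}"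
    apply (rule has_integral_spike_finite[OF fin _ piece[of "a0" "1" K4 Df f, OF _ _ K4d K6(4) D0 Dsuc]])
    using a by (auto simp: Kg_def)
  have I34: "(?g has_integral ((GG K3 Df a0 - GG K3 Df 0) + (GG K4 Df 1 - GG K4 Df a0))) {0..1}"
    by (rule has_integral_combine[OF _ _ I3 I4]) (use a in auto)
  have I234: "(?g has_integral ((GG K2 Df 0 - GG K2 Df (-a0)) + ((GG K3 Df a0 - GG K3 Df 0) + (GG K4 Df 1 - GG K4 Df a0)))) {-a0..1}"
    by (rule has_integral_combine[OF _ _ I2 I34]) (use a in auto)
  have I: "(?g has_integral ((GG K1 Df (-a0) - GG K1 Df (-1)) + ((GG K2 Df 0 - GG K2 Df (-a0)) + ((GG K3 Df a0 - GG K3 Df 0) + (GG K4 Df 1 - GG K4 Df a0))))) {-1..1}"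
    by (rule has_integral_combine[OF _ _ I1 I234]) (use a in auto)
  have n: "Df 0 (-1) = f (-1)" "Df 0 (-a0) = f (-a0)" "Df 0 0 = f 0" "Df 0 a0 = f a0" "Df 0 1 = f 1"
    using a by (auto intro!: D0)
  have "(GG K1 Df (-a0) - GG K1 Df (-1)) + ((GG K2 Df 0 - GG K2 Df (-a0)) + ((GG K3 Df a0 - GG K3 Df 0) + (GG K4 Df 1 - GG K4 Df a0)))
      = (2/5) * ((1/3) * (f (-1) + 4 * f 0 + f 1)) + (3/5) * (f (-a0) + f a0)"
    unfolding GG_def K12_0 K12_1 K12_2 K12_3 K12_4 K12_5
    by (simp add: n K1_def K2_def K3_def K4_def pw_def fact_numeral field_simps)
  with I show ?thesis by simp
qed


lemma K1_le: assumes "-1 \<le> x" "x \<le> -a0" shows "K1 0 x \<le> 0"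
proof -
  have e: "K1 0 x = (x+1)^5 * ((x+1)/720 - 1/900)"
    by (simp add: K1_def pw_def fact_numeral eval_nat_numeral field_simps)
  have "(x+1)^5 \<ge> 0" using assms by simp
  moreover have "(x+1)/720 - 1/900 \<le> 0" using assms a0_bds by (auto simp: field_simps)
  ultimately show ?thesis unfolding e by (rule mult_nonneg_nonpos)
qed

lemma K4_le: assumes "a0 \<le> x" "x \<le> 1" shows "K4 0 x \<le> 0"
proof -
  have e: "K4 0 x = (x-1)^5 * ((x-1)/720 + 1/900)"
    by (simp add: K4_def pw_def fact_numeral eval_nat_numeral field_simps)
  have "(x-1)^5 \<le> 0" using assms by (simp add: power_le_zero_eq)
  moreover have "(x-1)/720 + 1/900 \<ge> 0" using assms a0_bds by (auto simp: field_simps)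
  ultimately show ?thesis unfolding e by (simp add: mult_nonpos_nonneg)
qed

lemma K3_1_eq: "K3 1 x = x * (x^2 * (x^2/120 - x/90 + (11/180 - a0/10)) + (7/360 - a0/30))"
proof -
  have "K3 1 x - x * (x^2 * (x^2/120 - x/90 + (11/180 - a0/10)) + (7/360 - a0/30))
     = (a0^2 - 1/3) * (3*x^2/20 - a0*x/10 + (a0^2+1/3)/40)"
    by (simp add: K3_def K4_def pw_def fact_numeral eval_nat_numeral field_simps)
  then show ?thesis using s2 by simp
qed

lemma K3_1_ge: assumes "0 \<le> x" "x \<le> a0" shows "K3 1 x \<ge> 0"
proof -
  define Q where "Q y = y^2/120 - y/90 + (11/180 - a0/10)" for y
  have "Q x - Q a0 = (a0 - x) * (1/90 - (x + a0)/120)"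
    by (simp add: Q_def power2_eq_square field_simps)
  moreover have "1/90 - (x + a0)/120 \<ge> 0" using assms a0_bds by simp
  ultimately have QQ: "Q x \<ge> Q a0" using assms by (metis diff_ge_0_iff_ge mult_nonneg_nonneg)
  have Qa: "Q a0 = 23/360 - a0/9" unfolding Q_def using s2 by (simp add: algebra_simps)
  have Qa0: "Q a0 \<le> 0" using Qa a0_bds by simp
  have x2: "x^2 \<le> 1/3" using assms power_mono[of x a0 2] s2 by simp
  have "x^2 * Q x \<ge> x^2 * Q a0" using QQ by (simp add: mult_left_mono)
  moreover have "x^2 * Q a0 \<ge> (1/3) * Q a0" by (rule mult_right_mono_neg[OF x2 Qa0])
  ultimately have "x^2 * Q x + (7/360 - a0/30) \<ge> 0" using Qa a0_bds by linarith
  then show ?thesis unfolding K3_1_eq using assms Q_def by simp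
qed

lemma K3_le: assumes "0 \<le> x" "x \<le> a0" shows "K3 0 x \<le> 0"
proof -
  have "K3 0 x \<le> K3 0 a0"
    apply (rule DERIV_nonneg_imp_nondecreasing[OF assms(2)])
    using K3_1_ge K3d assms by (metis order.trans eval_nat_numeral(1) One_nat_def)
  also have "K3 0 a0 = K4 0 a0" by (simp add: K3_def pw_def)
  also have "\<dots> \<le> 0" using K4_le a0_bds by simp
  finally show ?thesis .
qed

lemma K2_eq: "K2 0 x = K3 0 (-x)"
proof -
  have "K2 0 x - K3 0 (-x) = (a0^2 - 1/3)*(x^3/10 + x*(a0^2+1/3)/20)"
    by (simp add: K2_def K3_def K4_def pw_def fact_numeral eval_nat_numeral field_simps)
  then show ?thesis using s2 by simp
qed

lemma Kg_le: assumes "-1 \<le> x" "x \<le> 1" shows "Kg x \<le> 0"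
  using assms K1_le K2_eq K3_le[of "-x"] K3_le[of x] K4_le[of x] by (auto simp: Kg_def)


lemma Kg_int: "(Kg has_integral (-1/28350)) {-1..1}"
proof -
  have P: "((\<lambda>x. x^6 - Kg x * pw 6 6 0 x) has_integral
     ((2/5) * ((1/3) * ((-1)^6 + 4 * 0^6 + 1^6)) + (3/5) * ((-a0)^6 + a0^6))) {-1..1}"
    apply (rule peano[of "\<lambda>k x. pw k 6 0 x" "\<lambda>x. x^6"])
     apply (simp add: pw_def)
    apply (rule pw_deriv)
    done
  have "a0^6 = (a0^2)^3" by (simp add: power_mult[symmetric])
  then have a6: "a0^6 = 1/27" using s2 by (simp add: power_divide)
  have P2: "((\<lambda>x. x^6 - Kg x * 720) has_integral (14/45)) {-1..1}"
    using P a6 by (simp add: pw_def fact_numeral)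
  have X: "((\<lambda>x. x^6) has_integral (2/7)) {-1..1::real}"
  proof -
    have "((\<lambda>x. x^6) has_integral ((\<lambda>x. x^7/7) 1 - (\<lambda>x. x^7/7) (-1))) {-1..1::real}"
      by (rule fundamental_theorem_of_calculus) (auto intro!: derivative_eq_intros simp: has_real_derivative_iff_has_vector_derivative[symmetric])
    then show ?thesis by simp
  qed
  have "((\<lambda>x. x^6 - (x^6 - Kg x * 720)) has_integral (2/7 - 14/45)) {-1..1}"
    by (rule has_integral_diff[OF X P2])
  then have "((\<lambda>x. Kg x * 720) has_integral (-8/315)) {-1..1}" by simp
  then have "((\<lambda>x. Kg x * 720 * (1/720)) has_integral (-8/315 * (1/720))) {-1..1}"
    by (rule has_integral_mult_left)
  then show ?thesis by simp
qed

theorem proposition5: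
  fixes f :: "real \<Rightarrow> real" and Df :: "nat \<Rightarrow> real \<Rightarrow> real"
  assumes D0: "\<And>x. x \<in> {-1..1} \<Longrightarrow> Df 0 x = f x"
    and Dsuc: "\<And>k x. k < 6 \<Longrightarrow> x \<in> {-1..1} \<Longrightarrow>
        (Df k has_real_derivative Df (Suc k) x) (at x within {-1..1})"
    and cont6: "continuous_on {-1..1} (Df 6)"
  shows "\<bar>(2/5) * ((1/3) * (f (-1) + 4 * f 0 + f 1))
           + (3/5) * (f (- sqrt 3 / 3) + f (sqrt 3 / 3))
           - integral {-1..1} f\<bar>
         \<le> (SUP x\<in>{-1..1}. \<bar>Df 6 x\<bar>) / 28350"
proof -
  define M where "M = (SUP x\<in>{-1..1::real}. \<bar>Df 6 x\<bar>)"
  define T where "T = (2/5) * ((1/3) * (f (-1) + 4 * f 0 + f 1)) + (3/5) * (f (-a0) + f a0)"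
  have sa: "- sqrt 3 / 3 = -a0" "sqrt 3 / 3 = a0" by (simp_all add: a0_def)
  have P: "((\<lambda>x. f x - Kg x * Df 6 x) has_integral T) {-1..1}"
    unfolding T_def by (rule peano[OF D0 Dsuc])
  have "continuous_on {-1..1} (Df 0)"
    using Dsuc[of 0] by (metis continuous_on_eq_continuous_within DERIV_continuous zero_less_numeral)
  then have "continuous_on {-1..1} f" using D0 by (metis continuous_on_eq)
  then have fi: "f integrable_on {-1..1}" by (rule integrable_continuous_interval)
  have H: "((\<lambda>x. f x - (f x - Kg x * Df 6 x)) has_integral (integral {-1..1} f - T)) {-1..1}"
    by (rule has_integral_diff[OF integrable_integral[OF fi] P])
  then have H': "((\<lambda>x. Kg x * Df 6 x) has_integral (integral {-1..1} f - T)) {-1..1}" by simp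
  have bdd: "bdd_above ((\<lambda>x. \<bar>Df 6 x\<bar>) ` {-1..1})"
    by (intro bounded_imp_bdd_above compact_imp_bounded compact_continuous_image continuous_intros cont6) simp
  have Mb: "\<bar>Df 6 x\<bar> \<le> M" if "x \<in> {-1..1}" for x
    unfolding M_def by (rule cSUP_upper[OF that bdd])
  have KM: "((\<lambda>x. Kg x * (-M)) has_integral (-1/28350 * (-M))) {-1..1}"
    by (rule has_integral_mult_left[OF Kg_int])
  have "norm (integral {-1..1} (\<lambda>x. Kg x * Df 6 x)) \<le> integral {-1..1} (\<lambda>x. Kg x * (-M))"
  proof (rule integral_norm_bound_integral)
    show "(\<lambda>x. Kg x * Df 6 x) integrable_on {-1..1}" using H' by blast
    show "(\<lambda>x. Kg x * (-M)) integrable_on {-1..1}" using KM by blast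
    fix x :: real assume x: "x \<in> {-1..1}"
    have "Kg x \<le> 0" using x Kg_le by auto
    then show "norm (Kg x * Df 6 x) \<le> Kg x * (-M)"
      using Mb[OF x] by (simp add: abs_mult mult_left_mono_neg)
  qed
  moreover have "integral {-1..1} (\<lambda>x. Kg x * (-M)) = M / 28350"
    using integral_unique[OF KM] by simp
  moreover have "integral {-1..1} (\<lambda>x. Kg x * Df 6 x) = integral {-1..1} f - T"
    by (rule integral_unique[OF H'])
  ultimately have "\<bar>integral {-1..1} f - T\<bar> \<le> M / 28350" by simp
  then show ?thesis unfolding sa M_def[symmetric] T_def[symmetric] by linarith
qed

end
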